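(* Let $\mathcal{A}$ be finite, $p\in\Delta_{\mathcal{A}}$ of full support, $\mathcal{E}$ an exponential family, and $q(T|A)\in C(\mathcal{A},\mathcal{T})$. Then $D(q(T)\|\tilde q(T))\le\Lambda:=D(p\|\tilde p)$, and the following are equivalent: (i) $D(q(T)\|\tilde q(T))=\Lambda$; (ii) for every $t\in\mathrm{supp}(q(T))$ there exists $\mathcal{A}_j\in\bar{\mathcal{A}}$ with $\mathcal{A}^q_t\subseteq\mathcal{A}_j$; (iii) the channel $\bar q\in C(\bar{\mathcal{A}},\mathcal{T})$ is congruent.
   Context: $\mathcal{T}=\mathbb{N}$. $\tilde p$ is the unique minimiser of $D(p\|r)$ over the closure of $\mathcal{E}$ (here of full support). $\bar{\mathcal{A}}=\{\mathcal{A}_j\}_j$ is the partition for $a\sim a'\iff p(a)\tilde p(a')=p(a')\tilde p(a)$. $q(t)=\sum_ap(a)q(t|a)$, $\tilde q(t)=\sum_a\tilde p(a)q(t|a)$, $\mathcal{A}^q_t:=\{a:q(t|a)>0\}$, $\bar q(t|\mathcal{A}_j):=\frac{\sum_{a\in\mathcal{A}_j}q(t|a)p(a)}{p(\mathcal{A}_j)}$. A channel $\gamma\in C(\mathcal{B},\mathcal{T})$ is congruent if there is a function $f:\mathcal{T}\to\mathcal{B}$ with $f\circ\gamma=e_{\mathcal{B}}$. *)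

theory Defs
  imports "HOL-Analysis.Analysis"
begin

definition KL :: "('b \<Rightarrow> real) \<Rightarrow> ('b \<Rightarrow> real) \<Rightarrow> ereal" where
  "KL mu nu =
     (if (\<forall>x. mu x > 0 \<longrightarrow> nu x > 0) \<and> (\<lambda>x. mu x * ln (mu x / nu x)) summable_on UNIV
      then ereal (\<Sum>\<^sub>\<infinity>x. mu x * ln (mu x / nu x)) else \<infinity>)"

definition expfam :: "('a::finite \<Rightarrow> real) \<Rightarrow> ('a \<Rightarrow> nat \<Rightarrow> real) \<Rightarrow> nat \<Rightarrow> ('a \<Rightarrow> real) set" where
  "expfam nu f d = {r. \<exists>\<theta>::nat \<Rightarrow> real.
      r = (\<lambda>a. nu a * exp (\<Sum>i<d. \<theta> i * f a i) /
               (\<Sum>b\<in>UNIV. nu b * exp (\<Sum>i<d. \<theta> i * f b i)))}"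

text \<open>Channel from a set B of inputs to T = nat: gamma b t = gamma(t|b).\<close>
definition channel :: "'b set \<Rightarrow> ('b \<Rightarrow> nat \<Rightarrow> real) \<Rightarrow> bool" where
  "channel B gamma \<longleftrightarrow> (\<forall>b\<in>B. (\<forall>t. gamma b t \<ge> 0) \<and> (gamma b has_sum 1) UNIV)"

definition outdist :: "('a::finite \<Rightarrow> real) \<Rightarrow> ('a \<Rightarrow> nat \<Rightarrow> real) \<Rightarrow> nat \<Rightarrow> real" where
  "outdist p q t = (\<Sum>a\<in>UNIV. p a * q a t)"

definition classes :: "('a::finite \<Rightarrow> real) \<Rightarrow> ('a \<Rightarrow> real) \<Rightarrow> 'a set set" where
  "classes p pt = UNIV // {(a, a'). p a * pt a' = p a' * pt a}"

definition qbar :: "('a::finite \<Rightarrow> real) \<Rightarrow> ('a \<Rightarrow> nat \<Rightarrow> real) \<Rightarrow> 'a set \<Rightarrow> nat \<Rightarrow> real" where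
  "qbar p q Aj t = (\<Sum>a\<in>Aj. q a t * p a) / sum p Aj"

text \<open>Congruent channel: there is f : T \<rightarrow> B with f o gamma = identity channel on B.\<close>
definition congruent_channel :: "'b set \<Rightarrow> ('b \<Rightarrow> nat \<Rightarrow> real) \<Rightarrow> bool" where
  "congruent_channel B gamma \<longleftrightarrow>
     (\<exists>f :: nat \<Rightarrow> 'b. (\<forall>t. f t \<in> B) \<and>
        (\<forall>b\<in>B. \<forall>b'\<in>B. (\<Sum>\<^sub>\<infinity>t\<in>{t. f t = b'}. gamma b t) = (if b = b' then 1 else 0)))"

end

theory Submission imports Defs begin

lemma logsum:
  fixes p pt w :: "'a::finite \<Rightarrow> real"
  assumes pp: "\<And>x. p x > 0" and ptp: "\<And>x. pt x > 0" and wn: "\<And>x. w x \<ge> 0"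
  shows "(\<Sum>x\<in>UNIV. p x * w x) * ln ((\<Sum>x\<in>UNIV. p x * w x) / (\<Sum>x\<in>UNIV. pt x * w x))
           \<le> (\<Sum>x\<in>UNIV. p x * w x * ln (p x / pt x))"
    and "(\<Sum>x\<in>UNIV. p x * w x) * ln ((\<Sum>x\<in>UNIV. p x * w x) / (\<Sum>x\<in>UNIV. pt x * w x))
           = (\<Sum>x\<in>UNIV. p x * w x * ln (p x / pt x))
         \<longleftrightarrow> (\<exists>c. \<forall>x. w x > 0 \<longrightarrow> p x / pt x = c)"
proof -
  define Q where "Q = (\<Sum>x\<in>UNIV. p x * w x)"
  define Qt where "Qt = (\<Sum>x\<in>UNIV. pt x * w x)"
  define S where "S = (\<Sum>x\<in>UNIV. p x * w x * ln (p x / pt x))"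
  have nn: "\<And>x. p x * w x \<ge> 0" using pp wn by (simp add: less_imp_le)
  have "(Q * ln (Q / Qt) \<le> S) \<and> (Q * ln (Q / Qt) = S \<longleftrightarrow> (\<exists>c. \<forall>x. w x > 0 \<longrightarrow> p x / pt x = c))"
  proof (cases "Q = 0")
    case True
    then have "\<forall>x. p x * w x = 0" unfolding Q_def using nn
      by (simp add: sum_nonneg_eq_0_iff)
    then have w0: "\<And>x. w x = 0" using pp by (metis less_irrefl mult_eq_0_iff)
    show ?thesis using True by (simp add: S_def w0)
  next
    case False
    then obtain x0 where x0: "p x0 * w x0 \<noteq> 0" unfolding Q_def by (meson sum.neutral)
    then have wx0: "w x0 > 0" using wn by (metis less_eq_real_def mult_zero_right)
    have "Q \<ge> 0" unfolding Q_def using nn by (simp add: sum_nonneg)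
    then have Qpos: "Q > 0" using False by simp
    have "Qt \<ge> pt x0 * w x0" unfolding Qt_def
      by (rule member_le_sum) (use ptp wn in \<open>auto intro: mult_nonneg_nonneg less_imp_le\<close>)
    then have Qtpos: "Qt > 0" using ptp[of x0] wx0 by (smt (verit) mult_pos_pos)
    define k where "k = Q / Qt"
    have kpos: "k > 0" using Qpos Qtpos by (simp add: k_def)
    define y where "y x = k * pt x / p x" for x
    have ypos: "y x > 0" for x using kpos ptp pp by (simp add: y_def)
    define e where "e x = p x * w x * (y x - 1 - ln (y x))" for x
    have enn: "e x \<ge> 0" for x using ln_le_minus_one[OF ypos[of x]] nn[of x]
      unfolding e_def by simp
    have lny: "ln (y x) = ln k + ln (pt x) - ln (p x)" for x
      using kpos ptp[of x] pp[of x] by (simp add: y_def ln_mult ln_div)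
    have lnr: "ln (p x / pt x) = ln (p x) - ln (pt x)" for x using ptp[of x] pp[of x] by (simp add: ln_div)
    have pwy: "p x * w x * y x = k * (pt x * w x)" for x using pp[of x] by (simp add: y_def field_simps)
    have "(\<Sum>x\<in>UNIV. e x) = (\<Sum>x\<in>UNIV. k * (pt x * w x)) - Q - (\<Sum>x\<in>UNIV. p x * w x * ln (y x))"
    proof -
      have "e x = k * (pt x * w x) - p x * w x - p x * w x * ln (y x)" for x
        unfolding e_def using pwy[of x] by (simp add: algebra_simps)
      then show ?thesis unfolding Q_def by (simp add: sum_subtractf)
    qed
    also have "(\<Sum>x\<in>UNIV. k * (pt x * w x)) = Q"
    proof -
      have "(\<Sum>x\<in>UNIV. k * (pt x * w x)) = k * Qt" unfolding Qt_def by (simp add: sum_distrib_left)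
      then show ?thesis using Qtpos by (simp add: k_def)
    qed
    also have "(\<Sum>x\<in>UNIV. p x * w x * ln (y x)) = Q * ln k - S"
      unfolding S_def Q_def lny lnr
      by (simp add: algebra_simps sum_subtractf sum.distrib sum_distrib_left sum_distrib_right)
    finally have gap: "(\<Sum>x\<in>UNIV. e x) = S - Q * ln (Q / Qt)" by (simp add: k_def)
    have "0 \<le> (\<Sum>x\<in>UNIV. e x)" by (simp add: sum_nonneg enn)
    then have le: "Q * ln (Q / Qt) \<le> S" using gap by simp
    have e0: "e x = 0 \<longleftrightarrow> (w x > 0 \<longrightarrow> p x / pt x = k)" for x
    proof
      assume "e x = 0"
      show "w x > 0 \<longrightarrow> p x / pt x = k"
      proof
        assume "w x > 0"
        then have "y x - 1 - ln (y x) = 0" using \<open>e x = 0\<close> pp[of x] unfolding e_def by simp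
        then have "y x = 1" using ln_eq_minus_one[OF ypos[of x]] by simp
        then show "p x / pt x = k" using pp[of x] ptp[of x] unfolding y_def by (simp add: field_simps)
      qed
    next
      assume h: "w x > 0 \<longrightarrow> p x / pt x = k"
      show "e x = 0"
      proof (cases "w x > 0")
        case True
        then have "y x = 1" using h pp[of x] ptp[of x] kpos unfolding y_def by (simp add: field_simps)
        then show ?thesis by (simp add: e_def)
      next
        case False
        then have "w x = 0" using wn[of x] by simp
        then show ?thesis by (simp add: e_def)
      qed
    qed
    have eq: "Q * ln (Q / Qt) = S \<longleftrightarrow> (\<exists>c. \<forall>x. w x > 0 \<longrightarrow> p x / pt x = c)"
    proof
      assume "Q * ln (Q / Qt) = S"
      then have "(\<Sum>x\<in>UNIV. e x) = 0" using gap by simp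
      then have "\<forall>x. e x = 0" using enn by (simp add: sum_nonneg_eq_0_iff)
      then show "\<exists>c. \<forall>x. w x > 0 \<longrightarrow> p x / pt x = c" using e0 by blast
    next
      assume "\<exists>c. \<forall>x. w x > 0 \<longrightarrow> p x / pt x = c"
      then obtain c where c: "\<And>x. w x > 0 \<Longrightarrow> p x / pt x = c" by blast
      have "p x * w x = c * (pt x * w x)" for x
      proof (cases "w x > 0")
        case True then show ?thesis using c[OF True] ptp[of x] by (simp add: field_simps)
      next
        case False then have "w x = 0" using wn[of x] by simp
        then show ?thesis by simp
      qed
      then have "Q = (\<Sum>x\<in>UNIV. c * (pt x * w x))" unfolding Q_def by (rule sum.cong[OF refl])
      then have "Q = c * Qt" unfolding Qt_def by (simp add: sum_distrib_left)
      then have "c = k" using Qtpos by (simp add: k_def)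
      then have "\<forall>x. e x = 0" using e0 c by blast
      then show "Q * ln (Q / Qt) = S" using gap by simp
    qed
    show ?thesis using le eq by blast
  qed
  then show "Q * ln (Q / Qt) \<le> S" "(Q * ln (Q / Qt) = S) \<longleftrightarrow> (\<exists>c. \<forall>x. w x > 0 \<longrightarrow> p x / pt x = c)"
    by auto
qed

lemma has_sum_sum_fin:
  fixes f :: "'i \<Rightarrow> 'b \<Rightarrow> real"
  assumes "finite I" "\<And>i. i \<in> I \<Longrightarrow> (f i has_sum s i) A"
  shows "((\<lambda>x. \<Sum>i\<in>I. f i x) has_sum (\<Sum>i\<in>I. s i)) A"
  using assms
proof (induction I rule: finite_induct)
  case empty then show ?case by simp
next
  case (insert i I)
  then show ?case by (simp add: has_sum_add)
qed

lemma summable_on_diff_real: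
  fixes f g :: "'b \<Rightarrow> real"
  assumes "f summable_on A" "g summable_on A"
  shows "(\<lambda>x. f x - g x) summable_on A" "infsum (\<lambda>x. f x - g x) A = infsum f A - infsum g A"
proof -
  have "(\<lambda>x. - g x) summable_on A" using assms(2) summable_on_uminus by blast
  then show "(\<lambda>x. f x - g x) summable_on A"
    using summable_on_add[OF assms(1)] by (simp add: diff_conv_add_uminus del: add_uminus_conv_diff)
  show "infsum (\<lambda>x. f x - g x) A = infsum f A - infsum g A"
    using infsum_add[OF assms(1) \<open>(\<lambda>x. - g x) summable_on A\<close>] infsum_uminus[of g A]
    by (simp add: diff_conv_add_uminus del: add_uminus_conv_diff)
qed

lemma pt_pos:
  fixes p pt nu :: "'a::finite \<Rightarrow> real"
    and f :: "'a \<Rightarrow> nat \<Rightarrow> real" and d :: nat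
  assumes p_pos: "\<forall>a. p a > 0"
    and nu_pos: "\<forall>a. nu a > 0"
    and pt_min: "\<forall>r\<in>closure (expfam nu f d). KL p pt \<le> KL p r"
  shows "\<forall>a. pt a > 0"
proof -
  define r0 where "r0 a = nu a / (\<Sum>b\<in>UNIV. nu b)" for a
  have "r0 \<in> expfam nu f d" unfolding expfam_def r0_def
    by (rule CollectI, rule exI[of _ "\<lambda>_. 0"]) simp
  then have "r0 \<in> closure (expfam nu f d)" using closure_subset by blast
  then have le: "KL p pt \<le> KL p r0" using pt_min by blast
  have sp: "(\<Sum>b\<in>UNIV. nu b) > 0" using nu_pos
    by (simp add: sum_pos)
  have "\<forall>x. r0 x > 0" using nu_pos sp by (simp add: r0_def)
  then have "KL p r0 \<noteq> \<infinity>" unfolding KL_def by simp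
  then have "KL p pt \<noteq> \<infinity>" using le by auto
  then have "\<forall>x. p x > 0 \<longrightarrow> pt x > 0" unfolding KL_def by (auto split: if_splits)
  then show ?thesis using p_pos by blast
qed


theorem lemma7:
  fixes p pt nu :: "'a::finite \<Rightarrow> real"
    and f :: "'a \<Rightarrow> nat \<Rightarrow> real" and d :: nat
    and q :: "'a \<Rightarrow> nat \<Rightarrow> real"
  assumes p_pos: "\<forall>a. p a > 0" and p_sum: "sum p UNIV = 1"
    and nu_pos: "\<forall>a. nu a > 0"
    and pt_in: "pt \<in> closure (expfam nu f d)"
    and pt_min: "\<forall>r\<in>closure (expfam nu f d). KL p pt \<le> KL p r"
    and q_ch: "channel UNIV q"
  shows "KL (outdist p q) (outdist pt q) \<le> KL p pt
    \<and> (KL (outdist p q) (outdist pt q) = KL p pt \<longleftrightarrow>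
         (\<forall>t. outdist p q t > 0 \<longrightarrow> (\<exists>Aj\<in>classes p pt. {a. q a t > 0} \<subseteq> Aj)))
    \<and> ((\<forall>t. outdist p q t > 0 \<longrightarrow> (\<exists>Aj\<in>classes p pt. {a. q a t > 0} \<subseteq> Aj)) \<longleftrightarrow>
         congruent_channel (classes p pt) (qbar p q))"
proof -
  have ptp: "\<And>a. pt a > 0" using pt_pos[OF p_pos nu_pos pt_min] by blast
  have pp: "\<And>a. p a > 0" using p_pos by blast
  have qn: "\<And>a t. q a t \<ge> 0" and qs: "\<And>a. (q a has_sum 1) UNIV"
    using q_ch unfolding channel_def by auto
  define Q where "Q = outdist p q"
  define Qt where "Qt = outdist pt q"
  define R where "R a = p a / pt a" for a
  define cls where "cls a = {a'. R a' = R a}" for a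
  define C where "C = classes p pt"
  define g where "g t = Q t * ln (Q t / Qt t)" for t
  define S where "S t = (\<Sum>x\<in>UNIV. p x * q x t * ln (p x / pt x))" for t
  define K where "K = (\<Sum>x\<in>UNIV. p x * ln (p x / pt x))"
  define P where "P t \<longleftrightarrow> (Q t > 0 \<longrightarrow> (\<exists>Aj\<in>C. {a. q a t > 0} \<subseteq> Aj))" for t
  have C_eq: "C = range cls"
  proof -
    have e: "p x * pt y = p y * pt x \<longleftrightarrow> R y = R x" for x y
      unfolding R_def using ptp[of x] ptp[of y] by (simp add: field_simps) (metis mult.commute)
    have "{(a, a'). p a * pt a' = p a' * pt a} `` {x} = cls x" for x
      unfolding cls_def using e by auto
    then show ?thesis unfolding C_def classes_def quotient_def by auto
  qed
  have Qn: "Q t \<ge> 0" for t unfolding Q_def outdist_def using pp qn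
    by (simp add: sum_nonneg less_imp_le)
  have Q0: "Q t = 0 \<longleftrightarrow> (\<forall>a. q a t = 0)" for t
  proof -
    have "Q t = 0 \<longleftrightarrow> (\<forall>a. p a * q a t = 0)" unfolding Q_def outdist_def
      using pp qn by (subst sum_nonneg_eq_0_iff) (auto intro: mult_nonneg_nonneg less_imp_le)
    then show ?thesis using pp by (metis less_irrefl mult_eq_0_iff)
  qed
  have Qpos: "Q t > 0 \<longleftrightarrow> (\<exists>a. q a t > 0)" for t
    using Q0[of t] Qn[of t] qn by (metis less_eq_real_def)
  have Qtn: "Qt t \<ge> 0" for t unfolding Qt_def outdist_def using ptp qn
    by (simp add: sum_nonneg less_imp_le)
  have QQt: "Q t > 0 \<Longrightarrow> Qt t > 0" for t
  proof -
    assume "Q t > 0"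
    then obtain a where a: "q a t > 0" using Qpos by blast
    have "Qt t \<ge> pt a * q a t" unfolding Qt_def outdist_def
      by (rule member_le_sum) (use ptp qn in \<open>auto intro: mult_nonneg_nonneg less_imp_le\<close>)
    then show "Qt t > 0" using ptp[of a] a by (smt (verit) mult_pos_pos)
  qed
  have logs: "g t \<le> S t" "g t = S t \<longleftrightarrow> (\<exists>c. \<forall>x. q x t > 0 \<longrightarrow> R x = c)" for t
    using logsum[of p pt "\<lambda>x. q x t", OF pp ptp qn]
    unfolding g_def S_def Q_def Qt_def outdist_def R_def by simp_all
  have P_iff: "P t \<longleftrightarrow> (\<exists>c. \<forall>x. q x t > 0 \<longrightarrow> R x = c)" for t
  proof
    assume h: "P t"
    show "\<exists>c. \<forall>x. q x t > 0 \<longrightarrow> R x = c"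
    proof (cases "Q t > 0")
      case True
      then obtain Aj where "Aj \<in> C" "{a. q a t > 0} \<subseteq> Aj" using h unfolding P_def by blast
      then obtain a where "{a. q a t > 0} \<subseteq> cls a" using C_eq by blast
      then show ?thesis unfolding cls_def by blast
    next
      case False
      then show ?thesis using Qpos by blast
    qed
  next
    assume "\<exists>c. \<forall>x. q x t > 0 \<longrightarrow> R x = c"
    then obtain c where c: "\<And>x. q x t > 0 \<Longrightarrow> R x = c" by blast
    show "P t" unfolding P_def
    proof
      assume "Q t > 0"
      then obtain a where a: "q a t > 0" using Qpos by blast
      have "{a. q a t > 0} \<subseteq> cls a" unfolding cls_def using c a by auto
      then show "\<exists>Aj\<in>C. {a. q a t > 0} \<subseteq> Aj" using C_eq by blast
    qed
  qed
  have Ssum: "(S has_sum K) UNIV"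
  proof -
    have "((\<lambda>t. q x t * (p x * ln (p x / pt x))) has_sum (1 * (p x * ln (p x / pt x)))) UNIV" for x
      by (rule has_sum_cmult_left[OF qs])
    then have "((\<lambda>t. \<Sum>x\<in>UNIV. q x t * (p x * ln (p x / pt x))) has_sum
                 (\<Sum>x\<in>UNIV. 1 * (p x * ln (p x / pt x)))) UNIV"
      by (intro has_sum_sum_fin) auto
    then show ?thesis unfolding S_def K_def by (simp add: mult_ac)
  qed
  have Qsum: "(Q has_sum (\<Sum>x\<in>UNIV. p x * 1)) UNIV"
  proof -
    have "((\<lambda>t. \<Sum>x\<in>UNIV. p x * q x t) has_sum (\<Sum>x\<in>UNIV. p x * 1)) UNIV"
      by (intro has_sum_sum_fin has_sum_cmult_right qs) auto
    then show ?thesis unfolding Q_def outdist_def .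
  qed
  have Qtsum: "(Qt has_sum (\<Sum>x\<in>UNIV. pt x * 1)) UNIV"
  proof -
    have "((\<lambda>t. \<Sum>x\<in>UNIV. pt x * q x t) has_sum (\<Sum>x\<in>UNIV. pt x * 1)) UNIV"
      by (intro has_sum_sum_fin has_sum_cmult_right qs) auto
    then show ?thesis unfolding Qt_def outdist_def .
  qed
  define L where "L t = Q t - Qt t" for t
  have Lsum: "L summable_on UNIV" unfolding L_def
    using summable_on_diff_real(1) Qsum Qtsum has_sum_imp_summable by blast
  have Lg: "L t \<le> g t" for t
  proof (cases "Q t > 0")
    case True
    then have qt: "Qt t > 0" using QQt by blast
    have "ln (Qt t / Q t) \<le> Qt t / Q t - 1" using ln_le_minus_one True qt by simp
    then have "Q t * ln (Qt t / Q t) \<le> Q t * (Qt t / Q t - 1)" using True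
      by (simp add: mult_left_mono)
    also have "\<dots> = Qt t - Q t" using True by (simp add: field_simps)
    finally have "Q t * ln (Qt t / Q t) \<le> Qt t - Q t" .
    moreover have "ln (Q t / Qt t) = - ln (Qt t / Q t)" using True qt by (simp add: ln_div)
    ultimately show ?thesis unfolding L_def g_def by simp
  next
    case False
    then have "Q t = 0" using Qn[of t] by simp
    then show ?thesis unfolding L_def g_def using Qtn[of t] by simp
  qed
  have Ssm: "S summable_on UNIV" using Ssum has_sum_imp_summable by blast
  have hsum: "(\<lambda>t. g t - L t) summable_on UNIV"
  proof (rule summable_on_comparison_test)
    show "(\<lambda>t. S t - L t) summable_on UNIV" using summable_on_diff_real(1)[OF Ssm Lsum] .
  qed (use Lg logs(1) in auto)
  have gsm: "g summable_on UNIV"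
  proof -
    have "(\<lambda>t. (g t - L t) + L t) summable_on UNIV" using summable_on_add[OF hsum Lsum] .
    then show ?thesis by simp
  qed
  have KL1: "KL Q Qt = ereal (infsum g UNIV)"
    unfolding KL_def g_def[symmetric] using QQt gsm by auto
  have KL2: "KL p pt = ereal K"
    unfolding KL_def K_def using ptp by auto
  have gS: "infsum g UNIV \<le> K \<and> (infsum g UNIV = K \<longleftrightarrow> (\<forall>t. g t = S t))"
  proof -
    have iS: "infsum S UNIV = K" using Ssum infsumI by blast
    have le: "infsum g UNIV \<le> K" using infsum_mono[OF gsm Ssm] logs(1) iS by auto
    have "infsum g UNIV = K \<longleftrightarrow> (\<forall>t. g t = S t)"
    proof
      assume h: "infsum g UNIV = K"
      have Dsm: "(\<lambda>t. S t - g t) summable_on UNIV" and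
        Di: "infsum (\<lambda>t. S t - g t) UNIV = infsum S UNIV - infsum g UNIV"
        using summable_on_diff_real[OF Ssm gsm] by auto
      show "\<forall>t. g t = S t"
      proof
        fix t
        have "S t - g t = 0"
          by (rule nonneg_infsum_le_0D[OF _ Dsm]) (use Di iS h logs(1) in auto)
        then show "g t = S t" by simp
      qed
    next
      assume "\<forall>t. g t = S t"
      then have "g = S" by auto
      then show "infsum g UNIV = K" using iS by simp
    qed
    then show ?thesis using le by blast
  qed
  have part12: "KL Q Qt \<le> KL p pt \<and> (KL Q Qt = KL p pt \<longleftrightarrow> (\<forall>t. P t))"
    using gS KL1 KL2 P_iff logs by auto
  have clsR: "a \<in> cls b \<longleftrightarrow> R a = R b" for a b unfolding cls_def by simp
  have spB: "sum p B > 0" if "B \<in> C" for B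
  proof -
    obtain b where b: "B = cls b" using \<open>B \<in> C\<close> C_eq by blast
    have "b \<in> B" using b clsR by simp
    then show ?thesis using pp by (simp add: sum_pos2[of B b p] less_imp_le)
  qed
  have qbn: "qbar p q B t \<ge> 0" if "B \<in> C" for B t
  proof -
    have "\<And>a. q a t * p a \<ge> 0" using qn pp by (simp add: less_imp_le)
    then have "(\<Sum>a\<in>B. q a t * p a) \<ge> 0" by (simp add: sum_nonneg)
    then show ?thesis unfolding qbar_def using spB[OF that] by simp
  qed
  have qbpos: "qbar p q B t > 0 \<longleftrightarrow> (\<exists>a\<in>B. q a t > 0)" if "B \<in> C" for B t
  proof -
    have "(\<Sum>a\<in>B. q a t * p a) > 0 \<longleftrightarrow> (\<exists>a\<in>B. q a t * p a > 0)"
    proof -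
      have nn: "\<And>a. q a t * p a \<ge> 0" using qn pp by (simp add: less_imp_le)
      have "(\<Sum>a\<in>B. q a t * p a) \<ge> 0" using nn by (simp add: sum_nonneg)
      moreover have "(\<Sum>a\<in>B. q a t * p a) = 0 \<longleftrightarrow> (\<forall>a\<in>B. q a t * p a = 0)"
        using nn by (simp add: sum_nonneg_eq_0_iff)
      moreover have "(\<forall>a\<in>B. q a t * p a = 0) \<longleftrightarrow> \<not> (\<exists>a\<in>B. q a t * p a > 0)"
        using nn by (auto simp: less_le)
      ultimately show ?thesis by linarith
    qed
    moreover have "q a t * p a > 0 \<longleftrightarrow> q a t > 0" for a
      using pp[of a] qn[of a t] by (simp add: zero_less_mult_iff)
    ultimately show ?thesis unfolding qbar_def using spB[OF that] by (simp add: zero_less_divide_iff)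
  qed
  have qb0: "qbar p q B t = 0" if "B \<in> C" "\<not> (\<exists>a\<in>B. q a t > 0)" for B t
  proof -
    have "\<not> qbar p q B t > 0" using qbpos[OF that(1), of t] that(2) by blast
    then show ?thesis using qbn[OF that(1), of t] by linarith
  qed
  have qbsum: "(qbar p q B has_sum 1) UNIV" if "B \<in> C" for B
  proof -
    have "((\<lambda>t. \<Sum>a\<in>B. q a t * p a) has_sum (\<Sum>a\<in>B. 1 * p a)) UNIV"
      by (intro has_sum_sum_fin has_sum_cmult_left qs) auto
    then have "((\<lambda>t. (\<Sum>a\<in>B. q a t * p a) * (1 / sum p B)) has_sum (sum p B * (1 / sum p B))) UNIV"
      by (intro has_sum_cmult_left) simp
    then show ?thesis using spB[OF that] unfolding qbar_def by simp
  qed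
  have part3: "(\<forall>t. P t) \<longleftrightarrow> congruent_channel C (qbar p q)"
  proof
    assume allP: "\<forall>t. P t"
    define F where "F t = (if Q t > 0 then cls (SOME a. q a t > 0) else cls undefined)" for t
    have FC: "F t \<in> C" for t unfolding F_def C_eq by auto
    have key: "qbar p q B t = 0" if hB: "B \<in> C" and hBF: "B \<noteq> F t" for B t
    proof (cases "Q t > 0")
      case True
      define a0 where "a0 = (SOME a. q a t > 0)"
      have a0: "q a0 t > 0" unfolding a0_def using True Qpos by (metis someI_ex)
      have Ft: "F t = cls a0" unfolding F_def a0_def using True by simp
      obtain c where c: "\<And>x. q x t > 0 \<Longrightarrow> R x = c" using allP P_iff by blast
      obtain b where b: "B = cls b" using hB C_eq by blast
      have "\<not> (\<exists>a\<in>B. q a t > 0)"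
      proof
        assume "\<exists>a\<in>B. q a t > 0"
        then obtain a where "a \<in> B" "q a t > 0" by blast
        then have "R a = R b" using b clsR by blast
        moreover have "R a = c" "R a0 = c" using c a0 \<open>q a t > 0\<close> by auto
        ultimately have "R b = R a0" by simp
        then have "B = F t" unfolding b Ft cls_def by simp
        then show False using hBF by simp
      qed
      then show ?thesis using qb0 hB by blast
    next
      case False
      then have "\<forall>a. q a t = 0" using Q0 Qn[of t] by (simp add: less_eq_real_def)
      then show ?thesis using qb0 hB by simp
    qed
    show "congruent_channel C (qbar p q)" unfolding congruent_channel_def
    proof (intro exI[of _ F] conjI ballI allI)
      show "F t \<in> C" for t by (rule FC)
      fix B B' assume B: "B \<in> C" and B': "B' \<in> C"
      show "(\<Sum>\<^sub>\<infinity>t\<in>{t. F t = B'}. qbar p q B t) = (if B = B' then 1 else 0)"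
      proof (cases "B = B'")
        case True
        have "(\<Sum>\<^sub>\<infinity>t\<in>{t. F t = B'}. qbar p q B t) = (\<Sum>\<^sub>\<infinity>t\<in>UNIV. qbar p q B t)"
          by (rule infsum_cong_neutral) (use key B True in auto)
        also have "\<dots> = 1" using qbsum[OF B] infsumI by blast
        finally show ?thesis using True by simp
      next
        case False
        have "(\<Sum>\<^sub>\<infinity>t\<in>{t. F t = B'}. qbar p q B t) = (\<Sum>\<^sub>\<infinity>t\<in>{t. F t = B'}. 0)"
          by (rule infsum_cong) (use key B False in auto)
        then show ?thesis using False by simp
      qed
    qed
  next
    assume "congruent_channel C (qbar p q)"
    then obtain F where FC: "\<And>t. F t \<in> C" and
      Fp: "\<And>B B'. B \<in> C \<Longrightarrow> B' \<in> C \<Longrightarrow>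
              (\<Sum>\<^sub>\<infinity>t\<in>{t. F t = B'}. qbar p q B t) = (if B = B' then 1 else 0)"
      unfolding congruent_channel_def by blast
    have noother: "qbar p q B t = 0" if "B \<in> C" "B \<noteq> F t" for B t
    proof -
      have sm: "qbar p q B summable_on {s. F s = F t}"
        using summable_on_subset[OF has_sum_imp_summable[OF qbsum[OF that(1)]]] by blast
      have "(\<Sum>\<^sub>\<infinity>s\<in>{s. F s = F t}. qbar p q B s) = 0" using Fp[OF that(1) FC[of t]] that(2) by simp
      then show ?thesis
        by (intro nonneg_infsum_le_0D[OF _ sm]) (use qbn[OF that(1)] in auto)
    qed
    show "\<forall>t. P t" unfolding P_def
    proof (intro allI impI)
      fix t assume "Q t > 0"
      then obtain a0 where a0: "q a0 t > 0" using Qpos by blast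
      have "{a. q a t > 0} \<subseteq> cls a0"
      proof
        fix a1 assume "a1 \<in> {a. q a t > 0}"
        then have a1: "q a1 t > 0" by simp
        show "a1 \<in> cls a0"
        proof (rule ccontr)
          assume n: "a1 \<notin> cls a0"
          have C0: "cls a0 \<in> C" "cls a1 \<in> C" using C_eq by auto
          have ne: "cls a0 \<noteq> cls a1" using n clsR by auto
          have p0: "qbar p q (cls a0) t > 0" using qbpos[OF C0(1)] a0 clsR by auto
          have p1: "qbar p q (cls a1) t > 0" using qbpos[OF C0(2)] a1 clsR by auto
          show False
          proof (cases "F t = cls a0")
            case True
            have "cls a1 \<noteq> F t" using True ne by simp
            then have "qbar p q (cls a1) t = 0" using noother[OF C0(2)] by blast
            then show False using p1 by simp
          next
            case False
            have "cls a0 \<noteq> F t" using False by simp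
            then have "qbar p q (cls a0) t = 0" using noother[OF C0(1)] by blast
            then show False using p0 by simp
          qed
        qed
      qed
      then show "\<exists>Aj\<in>C. {a. q a t > 0} \<subseteq> Aj" using C_eq by blast
    qed
  qed
  show ?thesis using part12 part3 unfolding P_def Q_def Qt_def C_def by simp
qed

end
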